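(* Let $\mathcal H=(H=A\oplus B,(\cdot,\cdot),x\mapsto x^*,U)$ be a structure algebra. For $a\in A$ let $\phi(a)\in B$ be the unique element with $(\phi(a),b)=(a,b)$ for all $b\in B$. Then $\phi:A\to B$ is an algebra homomorphism from $A$ into the center of $B$, and $ab=\phi(a)b$ for all $a\in A$, $b\in B$.
   Context: All vector spaces are finite-dimensional over $\mathbb C$. For an associative algebra $X$ with a symmetric invariant ($(xy,z)=(x,yz)$) bilinear form nondegenerate on $X$, basis $(e_i)$, Gram matrix $F_{ij}=(e_i,e_j)$ with inverse $(F^{ij})$, put $K_X=\sum F^{ij}e_ie_j$, $V_{K_X}(x)=\sum F^{ij}e_ixe_j$, and for an involutive antiautomorphism $*$ ($(x^* )^*=x$, $(xy)^*=y^*x^*$), $K_{X,*}=\sum F^{ij}e_ie_j^*$. A structure algebra is a tuple $(H=A\oplus B,(\cdot,\cdot),x\mapsto x^*,U)$ where $H$ is a finite-dimensional associative algebra, $H=A\oplus B$ is a decomposition into vector subspaces, $(\cdot,\cdot)$ is a symmetric invariant bilinear form on $H$, $*$ is an involutive antiautomorphism of $H$ and $U\in A$, such that: (1) $A$ is a subalgebra contained in the center of $H$ and its unit $1_A$ is the unit of $H$; (2) $B$ is a two-sided ideal with a unit $1_B$; (3) the restrictions of $(\cdot,\cdot)$ to $A$ and to $B$ are nondegenerate; (4) $(V_{K_B}(b_1),b_2)=\sum_{i,j}F^{ij}(e_i,b_1)(e_j,b_2)$ for all $b_1,b_2\in B$, where $(e_i)$ is a basis of $A$ and $F^{ij}$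 the inverse Gram matrix of $(\cdot,\cdot)|_A$; (5) $A^*=A$, $B^*=B$, $(x^*,y^* )=(x,y)$; (6) $U^2=K_{A,*}$; (7) $(U,b)=(K_{B,*},b)$ for all $b\in B$; (8) $(aU)^*=aU$ for all $a\in A$. (All of $K_A,K_{A,*},V_{K_B},K_{B,*}$ are computed inside $A$ or $B$ with the restricted form and involution.) *)

theory Defs
  imports Complex_Main
begin

definition cx_algebra :: "(complex \<Rightarrow> 'h::ring_1 \<Rightarrow> 'h) \<Rightarrow> bool" where
  "cx_algebra sc \<longleftrightarrow> vector_space sc
     \<and> (\<forall>c x y. sc c (x * y) = sc c x * y \<and> sc c (x * y) = x * sc c y)
     \<and> (\<exists>S. finite S \<and> module.span sc S = UNIV)"

definition is_basis_list :: "(complex \<Rightarrow> 'h::ring_1 \<Rightarrow> 'h) \<Rightarrow> 'h set \<Rightarrow> 'h list \<Rightarrow> bool" where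
  "is_basis_list sc X es \<longleftrightarrow> distinct es \<and> \<not> module.dependent sc (set es)
     \<and> module.span sc (set es) = X"

definition inv_gram :: "('h \<Rightarrow> 'h \<Rightarrow> complex) \<Rightarrow> 'h list \<Rightarrow> (nat \<Rightarrow> nat \<Rightarrow> complex) \<Rightarrow> bool" where
  "inv_gram form es G \<longleftrightarrow>
     (\<forall>i<length es. \<forall>j<length es.
        (\<Sum>k<length es. form (es!i) (es!k) * G k j) = (if i = j then 1 else 0))"

text \<open>Generic sum  sum_{i,j} g (F^{ij}) e_i e_j  over a basis of X
  (independent of the choice of basis).\<close>
definition gram_sum :: "(complex \<Rightarrow> 'h::ring_1 \<Rightarrow> 'h) \<Rightarrow> ('h \<Rightarrow> 'h \<Rightarrow> complex) \<Rightarrow> 'h set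
     \<Rightarrow> (complex \<Rightarrow> 'h \<Rightarrow> 'h \<Rightarrow> 'v::comm_monoid_add) \<Rightarrow> 'v" where
  "gram_sum sc form X g = (SOME s. \<exists>es G. is_basis_list sc X es \<and> inv_gram form es G
      \<and> s = (\<Sum>i<length es. \<Sum>j<length es. g (G i j) (es!i) (es!j)))"

definition K_elt :: "(complex \<Rightarrow> 'h::ring_1 \<Rightarrow> 'h) \<Rightarrow> ('h \<Rightarrow> 'h \<Rightarrow> complex) \<Rightarrow> 'h set \<Rightarrow> 'h" where
  "K_elt sc form X = gram_sum sc form X (\<lambda>c u v. sc c (u * v))"

definition V_K :: "(complex \<Rightarrow> 'h::ring_1 \<Rightarrow> 'h) \<Rightarrow> ('h \<Rightarrow> 'h \<Rightarrow> complex) \<Rightarrow> 'h set \<Rightarrow> 'h \<Rightarrow> 'h" where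
  "V_K sc form X x = gram_sum sc form X (\<lambda>c u v. sc c (u * x * v))"

definition K_star :: "(complex \<Rightarrow> 'h::ring_1 \<Rightarrow> 'h) \<Rightarrow> ('h \<Rightarrow> 'h \<Rightarrow> complex) \<Rightarrow> ('h \<Rightarrow> 'h)
     \<Rightarrow> 'h set \<Rightarrow> 'h" where
  "K_star sc form st X = gram_sum sc form X (\<lambda>c u v. sc c (u * st v))"

definition nondeg_on :: "('h::zero \<Rightarrow> 'h \<Rightarrow> complex) \<Rightarrow> 'h set \<Rightarrow> bool" where
  "nondeg_on form X \<longleftrightarrow> (\<forall>x\<in>X. (\<forall>y\<in>X. form x y = 0) \<longrightarrow> x = 0)"

definition structure_algebra ::
  "(complex \<Rightarrow> 'h::ring_1 \<Rightarrow> 'h) \<Rightarrow> 'h set \<Rightarrow> 'h set \<Rightarrow> ('h \<Rightarrow> 'h \<Rightarrow> complex)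
     \<Rightarrow> ('h \<Rightarrow> 'h) \<Rightarrow> 'h \<Rightarrow> bool" where
  "structure_algebra sc A B form st U \<longleftrightarrow>
     cx_algebra sc
     \<comment> \<open>H = A + B as a direct sum of subspaces\<close>
     \<and> module.subspace sc A \<and> module.subspace sc B
     \<and> (\<forall>x. \<exists>a\<in>A. \<exists>b\<in>B. x = a + b) \<and> A \<inter> B = {0}
     \<comment> \<open>symmetric invariant bilinear form\<close>
     \<and> (\<forall>x y z. form (x + y) z = form x z + form y z)
     \<and> (\<forall>c x y. form (sc c x) y = c * form x y)
     \<and> (\<forall>x y. form x y = form y x)
     \<and> (\<forall>x y z. form (x * y) z = form x (y * z))
     \<comment> \<open>involutive (complex-linear) antiautomorphism\<close>
     \<and> (\<forall>x y. st (x + y) = st x + st y) \<and> (\<forall>c x. st (sc c x) = sc c (st x))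
     \<and> (\<forall>x y. st (x * y) = st y * st x) \<and> (\<forall>x. st (st x) = x)
     \<and> U \<in> A
     \<comment> \<open>(1)\<close>
     \<and> (\<forall>x\<in>A. \<forall>y\<in>A. x * y \<in> A) \<and> 1 \<in> A \<and> (\<forall>a\<in>A. \<forall>x. a * x = x * a)
     \<comment> \<open>(2)\<close>
     \<and> (\<forall>b\<in>B. \<forall>x. x * b \<in> B \<and> b * x \<in> B)
     \<and> (\<exists>e\<in>B. \<forall>b\<in>B. e * b = b \<and> b * e = b)
     \<comment> \<open>(3)\<close>
     \<and> nondeg_on form A \<and> nondeg_on form B
     \<comment> \<open>(4)\<close>
     \<and> (\<forall>b1\<in>B. \<forall>b2\<in>B. form (V_K sc form B b1) b2
          = gram_sum sc form A (\<lambda>c u v. c * form u b1 * form v b2))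
     \<comment> \<open>(5)\<close>
     \<and> st ` A = A \<and> st ` B = B \<and> (\<forall>x y. form (st x) (st y) = form x y)
     \<comment> \<open>(6)\<close>
     \<and> U * U = K_star sc form st A
     \<comment> \<open>(7)\<close>
     \<and> (\<forall>b\<in>B. form U b = form (K_star sc form st B) b)
     \<comment> \<open>(8)\<close>
     \<and> (\<forall>a\<in>A. st (a * U) = a * U)"

end

theory Submission
  imports Defs
begin

theorem lemma2p1:
  fixes sc :: "complex \<Rightarrow> 'h::ring_1 \<Rightarrow> 'h"
    and A B :: "'h set" and form :: "'h \<Rightarrow> 'h \<Rightarrow> complex"
    and st :: "'h \<Rightarrow> 'h" and U :: 'h and \<phi> :: "'h \<Rightarrow> 'h"
  assumes "structure_algebra sc A B form st U"
    and "\<phi> = (\<lambda>a. THE b. b \<in> B \<and> (\<forall>b'\<in>B. form b b' = form a b'))"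
  shows "(\<forall>a\<in>A. \<exists>!b. b \<in> B \<and> (\<forall>b'\<in>B. form b b' = form a b'))
    \<and> (\<forall>a\<in>A. \<phi> a \<in> B \<and> (\<forall>b\<in>B. form (\<phi> a) b = form a b))
    \<and> (\<forall>a1\<in>A. \<forall>a2\<in>A. \<phi> (a1 + a2) = \<phi> a1 + \<phi> a2)
    \<and> (\<forall>c. \<forall>a\<in>A. \<phi> (sc c a) = sc c (\<phi> a))
    \<and> (\<forall>a1\<in>A. \<forall>a2\<in>A. \<phi> (a1 * a2) = \<phi> a1 * \<phi> a2)
    \<and> (\<forall>a\<in>A. \<forall>b\<in>B. \<phi> a * b = b * \<phi> a)
    \<and> (\<forall>a\<in>A. \<forall>b\<in>B. a * b = \<phi> a * b)"
proof -
  note S = assms(1)[unfolded structure_algebra_def]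
  have cx: "cx_algebra sc" using S by (elim conjE) assumption
  hence "vector_space sc" unfolding cx_algebra_def by blast
  hence md: "module sc" unfolding vector_space_def module_def by blast
  have subB: "module.subspace sc B" using S by (elim conjE) assumption
  have addB: "\<And>x y. x \<in> B \<Longrightarrow> y \<in> B \<Longrightarrow> x + y \<in> B"
    using subB md by (simp add: module.subspace_def)
  have a0: "\<forall>x y z. form (x + y) z = form x z + form y z" using S by (elim conjE) assumption
  have addf: "\<And>x y z. form (x + y) z = form x z + form y z" using a0 by blast
  have as0: "\<forall>x y z. form (x * y) z = form x (y * z)" using S by (elim conjE) assumption
  have assoc: "\<And>x y z. form (x * y) z = form x (y * z)" using as0 by blast
  have c0: "\<forall>a\<in>A. \<forall>x. a * x = x * a" using S by (elim conjE) assumption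
  have central: "\<And>a x. a \<in> A \<Longrightarrow> a * x = x * a" using c0 by blast
  have i0: "\<forall>b\<in>B. \<forall>x. x * b \<in> B \<and> b * x \<in> B" using S by (elim conjE) assumption
  have ideal: "\<And>b x. b \<in> B \<Longrightarrow> x * b \<in> B \<and> b * x \<in> B" using i0 by blast
  have ndB: "nondeg_on form B" using S by (elim conjE) assumption
  have e0: "\<exists>e\<in>B. \<forall>b\<in>B. e * b = b \<and> b * e = b" using S by (elim conjE) assumption
  have scm: "\<And>c x y. sc c (x * y) = sc c x * y" using cx unfolding cx_algebra_def by blast
  obtain e where eB: "e \<in> B" and e: "\<And>b. b \<in> B \<Longrightarrow> e * b = b \<and> b * e = b" using e0 by blast
  have subf: "form (x - y) z = form x z - form y z" for x y z
    using addf[of "x - y" y z] by simp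
  have uniq: "b1 = b2" if "b1 \<in> B" "b2 \<in> B" "\<forall>b'\<in>B. form b1 b' = form b2 b'" for b1 b2
  proof -
    have "b1 - b2 \<in> B" using addB[of b1 "(-1) * b2"] ideal[of b2 "-1"] that by simp
    moreover have "\<forall>y\<in>B. form (b1 - b2) y = 0" using that subf by simp
    ultimately have "b1 - b2 = 0" using ndB unfolding nondeg_on_def by blast
    thus ?thesis by simp
  qed
  have P: "a * e \<in> B \<and> (\<forall>b'\<in>B. form (a * e) b' = form a b')" for a
  proof
    show "a * e \<in> B" using ideal[OF eB, of a] by blast
    show "\<forall>b'\<in>B. form (a * e) b' = form a b'"
    proof
      fix b' assume "b' \<in> B"
      then have "e * b' = b'" using e by blast
      then show "form (a * e) b' = form a b'" using assoc[of a e b'] by simp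
    qed
  qed
  have phi: "\<phi> a = a * e" for a
    unfolding assms(2)
  proof (rule the_equality)
    show "a * e \<in> B \<and> (\<forall>b'\<in>B. form (a * e) b' = form a b')" by (rule P)
    fix b assume h: "b \<in> B \<and> (\<forall>b'\<in>B. form b b' = form a b')"
    show "b = a * e"
    proof (rule uniq)
      show "b \<in> B" using h by blast
      show "a * e \<in> B" using P by blast
      show "\<forall>b'\<in>B. form b b' = form (a * e) b'" using h P by simp
    qed
  qed
  have ee: "e * e = e" using e eB by blast
  show ?thesis
  proof (intro conjI ballI allI)
    show "\<exists>!b. b \<in> B \<and> (\<forall>b'\<in>B. form b b' = form a b')" for a
    proof
      show "a * e \<in> B \<and> (\<forall>b'\<in>B. form (a * e) b' = form a b')" by (rule P)
      fix b assume h: "b \<in> B \<and> (\<forall>b'\<in>B. form b b' = form a b')"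
      show "b = a * e"
      proof (rule uniq)
        show "b \<in> B" using h by blast
        show "a * e \<in> B" using P by blast
        show "\<forall>b'\<in>B. form b b' = form (a * e) b'" using h P by simp
      qed
    qed
    show "\<phi> a \<in> B" for a using phi P by simp
    show "form (\<phi> a) b = form a b" if "b \<in> B" for a b using phi P that by simp
    show "\<phi> (a1 + a2) = \<phi> a1 + \<phi> a2" for a1 a2 by (simp add: phi distrib_right)
    show "\<phi> (sc c a) = sc c (\<phi> a)" for c a by (simp add: phi scm)
    show "\<phi> (a1 * a2) = \<phi> a1 * \<phi> a2" if "a2 \<in> A" for a1 a2
    proof -
      have "a1 * e * (a2 * e) = a1 * (e * a2) * e" by (simp add: mult.assoc)
      also have "\<dots> = a1 * a2 * (e * e)"
      proof -
        have c: "e * a2 = a2 * e" using central[OF that, of e] by simp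
        show ?thesis unfolding c by (simp add: mult.assoc)
      qed
      finally show ?thesis using ee by (simp add: phi mult.assoc)
    qed
    show "\<phi> a * b = b * \<phi> a" if "a \<in> A" "b \<in> B" for a b
    proof -
      have "b * (a * e) = a * (b * e)" using central[OF that(1), of b] by (simp add: mult.assoc[symmetric])
      also have "\<dots> = a * (e * b)" using e[OF that(2)] by simp
      finally show ?thesis by (simp add: phi mult.assoc)
    qed
    show "a * b = \<phi> a * b" if "b \<in> B" for a b
      using e[OF that] by (simp add: phi mult.assoc)
  qed
qed

end
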